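(* Let $n\in\mathbb{Z}\setminus\{0\}$, $c,d\in\mathbb{N}$, and $f:\mathbb{Z}\to\mathbb{C}$, and set $$\mathcal{T}_n(c,d)=\sum_{\substack{a,b\in\mathbb{Z}\setminus\{0\}\\ ad-bc=n}} f(bc),$$ the sum being zero if there are no such $a,b$. If $\gcd(c,d)\nmid n$ then $\mathcal{T}_n(c,d)=0$. If $\gcd(c,d)\mid n$ (and the series converge absolutely), then $$\mathcal{T}_n(c,d)=\sum_{m\in\mathbb{Z}} f\big((m+u_{c,d})\,v_{c,d}\big)-\delta_{c\mid n}\,f(-n)-\delta_{d\mid n}\,f(0).$$
   Context: For $c,d\in\mathbb{N}$ with $\gcd(c,d)\mid n$: $B=\{b\in\mathbb{Z}:\exists a\in\mathbb{Z},\ ad-bc=n\}$, $b^*$ is an element of $B$ of minimal absolute value, $u_{c,d}=b^*\gcd(c,d)/d$, and $v_{c,d}=cd/\gcd(c,d)$. (The value of $u_{c,d}$ depends on the choice of $b^*$ only up to an integer, which does not affect the sum over $m\in\mathbb{Z}$.) $\delta_{c\mid n}$ equals $1$ if $c$ divides $n$ and $0$ otherwise; similarly $\delta_{d\mid n}$. *)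

theory Defs
  imports "HOL-Analysis.Analysis"
begin

definition T_set :: "int \<Rightarrow> nat \<Rightarrow> nat \<Rightarrow> (int \<times> int) set" where
  "T_set n c d = {(a, b). a \<noteq> 0 \<and> b \<noteq> 0 \<and> a * int d - b * int c = n}"

definition T_sum :: "int \<Rightarrow> nat \<Rightarrow> nat \<Rightarrow> (int \<Rightarrow> complex) \<Rightarrow> complex" where
  "T_sum n c d f = (\<Sum>\<^sub>\<infinity>(a, b) \<in> T_set n c d. f (b * int c))"

definition B_set :: "int \<Rightarrow> nat \<Rightarrow> nat \<Rightarrow> int set" where
  "B_set n c d = {b. \<exists>a::int. a * int d - b * int c = n}"

definition bstar :: "int \<Rightarrow> nat \<Rightarrow> nat \<Rightarrow> int" where
  "bstar n c d = (SOME b. b \<in> B_set n c d \<and> (\<forall>b'\<in>B_set n c d. \<bar>b\<bar> \<le> \<bar>b'\<bar>))"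

definition u_cd :: "int \<Rightarrow> nat \<Rightarrow> nat \<Rightarrow> rat" where
  "u_cd n c d = of_int (bstar n c d) * of_nat (gcd c d) / of_nat d"

definition v_cd :: "nat \<Rightarrow> nat \<Rightarrow> rat" where
  "v_cd c d = of_nat (c * d) / of_nat (gcd c d)"

end

theory Submission
  imports Defs
begin

lemma bstar_props:
  fixes n :: int and c d :: nat
  assumes "B_set n c d \<noteq> {}"
  shows "bstar n c d \<in> B_set n c d"
proof -
  obtain b0 where b0: "b0 \<in> B_set n c d" using assms by blast
  define k where "k = (LEAST k. \<exists>b\<in>B_set n c d. nat \<bar>b\<bar> = k)"
  have "\<exists>b\<in>B_set n c d. nat \<bar>b\<bar> = k" unfolding k_def
    by (rule LeastI[of _ "nat \<bar>b0\<bar>"]) (use b0 in blast)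
  then obtain b where b: "b \<in> B_set n c d" "nat \<bar>b\<bar> = k" by blast
  have "\<forall>b'\<in>B_set n c d. \<bar>b\<bar> \<le> \<bar>b'\<bar>"
  proof
    fix b' assume "b' \<in> B_set n c d"
    then have "k \<le> nat \<bar>b'\<bar>" unfolding k_def by (intro Least_le) blast
    then show "\<bar>b\<bar> \<le> \<bar>b'\<bar>" using b by linarith
  qed
  then have "\<exists>b. b \<in> B_set n c d \<and> (\<forall>b'\<in>B_set n c d. \<bar>b\<bar> \<le> \<bar>b'\<bar>)" using b by blast
  then show ?thesis unfolding bstar_def by (rule someI_ex[THEN conjunct1])
qed

lemma B_nonempty:
  fixes n :: int and c d :: nat
  assumes "int (gcd c d) dvd n"
  shows "B_set n c d \<noteq> {}"
proof -
  obtain k where k: "n = int (gcd c d) * k" using assms by blast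
  have "gcd (int d) (int c) = int (gcd c d)" by (simp add: gcd.commute)
  then obtain x y where xy: "x * int d + y * int c = int (gcd c d)"
    by (metis bezout_int)
  have "(x*k) * int d - (-(y*k)) * int c = k * (x * int d + y * int c)" by (simp add: algebra_simps)
  also have "\<dots> = n" using xy k by simp
  finally have "(x*k) * int d - (-(y*k)) * int c = n" .
  then show ?thesis unfolding B_set_def by blast
qed

lemma B_char:
  fixes n :: int and c d :: nat
  assumes bs: "bs \<in> B_set n c d" and c: "c > 0" and d: "d > 0"
  defines "d' \<equiv> int d div int (gcd c d)"
  shows "B_set n c d = range (\<lambda>m. bs + d' * m)"
proof -
  define G where "G = int (gcd c d)"
  define c' where "c' = int c div G"
  have G0: "G > 0" using c unfolding G_def by simp
  have Gd: "int d = G * d'" unfolding G_def d'_def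
    by (metis dvd_mult_div_cancel gcd_dvd2 of_nat_dvd_iff)
  have Gc: "int c = G * c'" unfolding G_def c'_def
    by (metis dvd_mult_div_cancel gcd_dvd1 of_nat_dvd_iff)
  have cop: "coprime c' d'"
  proof -
    have "gcd (int c) (int d) = G" unfolding G_def by simp
    then show ?thesis unfolding c'_def d'_def using G0
      by (metis div_gcd_coprime less_irrefl G_def of_nat_0 gcd_eq_0_iff c)
  qed
  obtain as where as: "as * int d - bs * int c = n" using bs unfolding B_set_def by blast
  show ?thesis
  proof (intro set_eqI iffI)
    fix b assume "b \<in> B_set n c d"
    then obtain a where a: "a * int d - b * int c = n" unfolding B_set_def by blast
    have "G * ((a - as) * d') = G * ((b - bs) * c')"
      using a as Gd Gc by (simp add: algebra_simps)
    then have e: "(a - as) * d' = (b - bs) * c'" using G0 by simp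
    then have "d' dvd (b - bs) * c'" by (metis dvd_triv_right)
    then have "d' dvd (b - bs)" using cop
      by (metis coprime_commute coprime_dvd_mult_left_iff)
    then obtain m where "b - bs = d' * m" by blast
    then have "b = bs + d' * m" by simp
    then show "b \<in> range (\<lambda>m. bs + d' * m)" by blast
  next
    fix b assume "b \<in> range (\<lambda>m. bs + d' * m)"
    then obtain m where m: "b = bs + d' * m" by blast
    have "(as + c' * m) * int d - b * int c = n"
      using as m Gd Gc by (simp add: algebra_simps)
    then show "b \<in> B_set n c d" unfolding B_set_def by blast
  qed
qed

theorem lemma2p4:
  fixes n :: int and c d :: nat and f :: "int \<Rightarrow> complex"
  assumes "n \<noteq> 0" and "c > 0" and "d > 0"
  shows "(\<not> (int (gcd c d) dvd n) \<longrightarrow> T_sum n c d f = 0)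
    \<and> ((int (gcd c d) dvd n
         \<and> (\<lambda>(a, b). f (b * int c)) summable_on T_set n c d
         \<and> (\<lambda>m::int. f \<lfloor>(of_int m + u_cd n c d) * v_cd c d\<rfloor>) summable_on UNIV)
       \<longrightarrow> T_sum n c d f =
             (\<Sum>\<^sub>\<infinity>m::int. f \<lfloor>(of_int m + u_cd n c d) * v_cd c d\<rfloor>)
             - of_bool (int c dvd n) * f (- n) - of_bool (int d dvd n) * f 0)"
proof (intro conjI impI)
  assume nd: "\<not> int (gcd c d) dvd n"
  have "T_set n c d = {}"
  proof (rule ccontr)
    assume "T_set n c d \<noteq> {}"
    then obtain a b where "a * int d - b * int c = n" unfolding T_set_def by auto
    moreover have "int (gcd c d) dvd a * int d - b * int c"
      by (intro dvd_diff dvd_mult) (simp_all add: int_dvd_int_iff)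
    ultimately show False using nd by simp
  qed
  then show "T_sum n c d f = 0" unfolding T_sum_def by simp
next
  assume H: "int (gcd c d) dvd n
         \<and> (\<lambda>(a, b). f (b * int c)) summable_on T_set n c d
         \<and> (\<lambda>m::int. f \<lfloor>(of_int m + u_cd n c d) * v_cd c d\<rfloor>) summable_on UNIV"
  define bs where "bs = bstar n c d"
  define G where "G = int (gcd c d)"
  define d' where "d' = int d div G"
  define S where "S = (\<Sum>\<^sub>\<infinity>m::int. f \<lfloor>(of_int m + u_cd n c d) * v_cd c d\<rfloor>)"
  define \<phi> where "\<phi> = (\<lambda>b. f (b * int c))"
  define B where "B = B_set n c d"
  have G0: "G > 0" using assms unfolding G_def by simp
  have Gd: "int d = G * d'" unfolding G_def d'_def
    by (metis dvd_mult_div_cancel gcd_dvd2 of_nat_dvd_iff)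
  have d'0: "d' \<noteq> 0" using Gd assms by auto
  have bsB: "bs \<in> B" unfolding bs_def B_def using H by (intro bstar_props B_nonempty) auto
  have Bc: "B = range (\<lambda>m. bs + d' * m)" unfolding B_def d'_def G_def
    using B_char[OF bsB[unfolded B_def]] assms by simp
  have fl: "\<lfloor>(of_int m + u_cd n c d) * v_cd c d\<rfloor> = (bs + d' * m) * int c" for m
  proof -
    have "(of_int m + u_cd n c d) * v_cd c d = (of_int ((bs + d' * m) * int c) :: rat)"
    proof -
      have dq: "(of_nat d :: rat) = of_int G * of_int d'"
        by (metis Gd of_int_mult of_int_of_nat_eq)
      have gq: "(of_nat (gcd c d) :: rat) = of_int G" unfolding G_def by simp
      show ?thesis unfolding u_cd_def v_cd_def bs_def[symmetric] using G0 d'0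
        by (simp add: dq gq field_simps)
    qed
    then show ?thesis by (metis floor_of_int)
  qed
  have inj: "inj (\<lambda>m. bs + d' * m)" using d'0 by (auto simp: inj_def)
  have "S = infsum \<phi> B"
    unfolding S_def Bc fl infsum_reindex[OF inj] \<phi>_def by (simp add: o_def)
  have sumB: "\<phi> summable_on B"
    unfolding Bc summable_on_reindex[OF inj] \<phi>_def o_def
    using H unfolding fl by simp
  have hB: "(\<phi> has_sum S) B" using sumB \<open>S = infsum \<phi> B\<close> by simp
  define E where "E = {b. b = 0 \<and> int d dvd n} \<union> {b. int c dvd n \<and> b = - (n div int c)}"
  have finE: "finite E" unfolding E_def by auto
  have EB: "E \<subseteq> B"
  proof
    fix b assume "b \<in> E"
    then consider "b = 0" "int d dvd n" | "int c dvd n" "b = - (n div int c)" unfolding E_def by auto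
    then show "b \<in> B"
    proof cases
      case 1
      then obtain a where "n = int d * a" by blast
      then have "a * int d - b * int c = n" using 1 by (simp add: algebra_simps)
      then show ?thesis unfolding B_def B_set_def by blast
    next
      case 2
      then have "0 * int d - b * int c = n" by simp
      then show ?thesis unfolding B_def B_set_def by blast
    qed
  qed
  have sumE: "sum \<phi> E = of_bool (int c dvd n) * f (- n) + of_bool (int d dvd n) * f 0"
  proof -
    have ne: "int c dvd n \<Longrightarrow> n div int c \<noteq> 0" using assms by auto
    have v: "int c dvd n \<Longrightarrow> f (- (n div int c) * int c) = f (- n)" by simp
    show ?thesis
      by (cases "int c dvd n"; cases "int d dvd n") (auto simp: E_def \<phi>_def ne v sum.insert_if)
  qed
  have P: "snd ` T_set n c d = B - E"
  proof (intro set_eqI iffI)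
    fix b assume "b \<in> snd ` T_set n c d"
    then obtain a where a: "a \<noteq> 0" "b \<noteq> 0" "a * int d - b * int c = n" unfolding T_set_def by auto
    have "b \<notin> E"
    proof
      assume "b \<in> E"
      then have "int c dvd n" "b = - (n div int c)" using a(2) unfolding E_def by auto
      then have "b * int c = - n" by simp
      then have "a * int d = 0" using a(3) by simp
      then show False using a(1) assms by simp
    qed
    then show "b \<in> B - E" using a unfolding B_def B_set_def by blast
  next
    fix b assume b: "b \<in> B - E"
    then obtain a where a: "a * int d - b * int c = n" unfolding B_def B_set_def by blast
    have "b \<noteq> 0"
    proof
      assume "b = 0"
      then have "int d dvd n" using a by (metis add.right_neutral diff_zero dvd_triv_right mult_zero_left)
      then show False using b \<open>b = 0\<close> unfolding E_def by auto
    qed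
    moreover have "a \<noteq> 0"
    proof
      assume "a = 0"
      then have "n = - b * int c" using a by simp
      moreover have "- (b * int c) div int c = - b" using assms by (simp add: zdiv_zminus1_eq_if)
      ultimately have "int c dvd n" "b = - (n div int c)" using assms by auto
      then show False using b unfolding E_def by auto
    qed
    ultimately show "b \<in> snd ` T_set n c d" using a unfolding T_set_def by force
  qed
  have injs: "inj_on snd (T_set n c d)"
  proof (rule inj_onI)
    fix x y assume "x \<in> T_set n c d" "y \<in> T_set n c d" "snd x = snd y"
    then show "x = y" unfolding T_set_def using assms by (auto simp: prod_eq_iff)
  qed
  have "T_sum n c d f = infsum \<phi> (snd ` T_set n c d)"
    unfolding T_sum_def infsum_reindex[OF injs] \<phi>_def by (simp add: o_def case_prod_unfold)
  also have "\<dots> = S - sum \<phi> E"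
    unfolding P by (rule infsumI, rule has_sum_Diff[OF hB has_sum_finite[OF finE] EB])
  finally show "T_sum n c d f = S - of_bool (int c dvd n) * f (- n) - of_bool (int d dvd n) * f 0"
    using sumE by simp
qed

end
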